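(* Let $N\ge1$, let $\mathsf L=\mathrm{diag}(L_1,\dots,L_N)$ with nonzero complex $L_n$, let $|1\rangle$ be the $N$-column with all entries $1$, and let $\mathsf A$ be an $N\times N$ matrix satisfying $\mathsf L\mathsf A-\mathsf A\mathsf L^{-1}=|1\rangle\langle a|$ for some $N$-row $\langle a|$. For a complex number $\xi$ with $\xi\notin\{L_n,L_n^{-1}\}$ for all $n$, set $\mathsf H_\xi=(\xi-\mathsf L)(\xi-\mathsf L^{-1})^{-1}$ (so $\mathsf H_0=\mathsf L^2$). For functions $f(\mathsf A,F)$ of such a matrix $\mathsf A$ and a nonzero scalar $F$, define the shift $\mathbb T_\xi f(\mathsf A,F)=f(\mathsf A\mathsf H_\xi,-\xi F)$ (note $\mathsf A\mathsf H_\xi$ again satisfies the same type of relation, with row $\langle a|\mathsf H_\xi$). Define $$\tau(\mathsf A,F)=\det(\mathsf 1+\mathsf A),\quad \sigma(\mathsf A,F)=-F^{-1}\det(\mathsf 1+\mathsf A\mathsf H_0^{-1}),\quad \rho(\mathsf A,F)=F\det(\mathsf 1+\mathsf A\mathsf H_0),$$ i.e. $\tau=\Omega$, $\sigma=-F^{-1}\mathbb T_0^{-1}\Omega$, $\rho=F\,\mathbb T_0\Omega$ with $\Omega=\det(\mathsf 1+\mathsf A)$. Then for all nonzero $\xi,\eta\notin\{L_n,L_n^{-1}:n=1,\dots,N\}$, $$(\xi-\eta)\,\tau\,\mathbb T_\xi\mathbb T_\eta\sigma=\mathbb T_\xi\sigma\,\mathbb T_\eta\tau-\mathbb T_\xi\tau\,\mathbb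 T_\eta\sigma,$$ $$(\xi-\eta)\,\rho\,\mathbb T_\xi\mathbb T_\eta\tau=\mathbb T_\xi\tau\,\mathbb T_\eta\rho-\mathbb T_\xi\rho\,\mathbb T_\eta\tau,$$ $$\left(1-\frac{1}{\xi\eta}\right)\mathbb T_\xi\tau\,\mathbb T_\eta\tau=\tau\,\mathbb T_\xi\mathbb T_\eta\tau+\rho\,\mathbb T_\xi\mathbb T_\eta\sigma,$$ all functions being evaluated at the same $(\mathsf A,F)$.
   Context: Here $\mathsf 1$ is the $N\times N$ identity matrix; all matrices $\mathsf H_\xi$ are diagonal and commute. In particular $\mathbb T_\xi F=-\xi F$ for the scalar $F$. *)

theory Defs
  imports "HOL-Analysis.Analysis"
begin

definition diagm :: "complex^'n \<Rightarrow> complex^'n^'n" where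
  "diagm v = (\<chi> i j. if i = j then v $ i else 0)"

definition Lmat :: "complex^'n \<Rightarrow> complex^'n^'n" where
  "Lmat l = diagm l"
definition Linv :: "complex^'n \<Rightarrow> complex^'n^'n" where
  "Linv l = diagm (\<chi> n. inverse (l $ n))"

definition Hm :: "complex^'n \<Rightarrow> complex \<Rightarrow> complex^'n^'n" where
  "Hm l \<xi> = diagm (\<chi> n. (\<xi> - l $ n) / (\<xi> - inverse (l $ n)))"

definition shift :: "complex^'n \<Rightarrow> complex \<Rightarrow>
    (complex^'n^'n \<Rightarrow> complex \<Rightarrow> complex) \<Rightarrow> complex^'n^'n \<Rightarrow> complex \<Rightarrow> complex" where
  "shift l \<xi> f A F = f (A ** Hm l \<xi>) (- \<xi> * F)"

definition tau :: "complex^'n^'n \<Rightarrow> complex \<Rightarrow> complex" where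
  "tau A F = det (mat 1 + A)"

definition sigma :: "complex^'n \<Rightarrow> complex^'n^'n \<Rightarrow> complex \<Rightarrow> complex" where
  "sigma l A F = - inverse F * det (mat 1 + A ** matrix_inv (Hm l 0))"

definition rho :: "complex^'n \<Rightarrow> complex^'n^'n \<Rightarrow> complex \<Rightarrow> complex" where
  "rho l A F = F * det (mat 1 + A ** Hm l 0)"

end

theory Submission
  imports Defs "HOL-Computational_Algebra.Polynomial"
begin

definition outer :: "complex^'n \<Rightarrow> complex^'n \<Rightarrow> complex^'n^'n" where
  "outer u w = (\<chi> i j. u$i * w$j)"

definition dotp :: "complex^'n \<Rightarrow> complex^'n \<Rightarrow> complex" where
  "dotp z u = (\<Sum>k\<in>UNIV. z$k * u$k)"

lemma det_rank1_gen:
  fixes r :: "'n::finite \<Rightarrow> complex^'n" and c :: "'n \<Rightarrow> complex"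
  assumes "finite S"
  shows "det (\<chi> i. if i \<in> S then r i + c i *s w else r i)
       = det (\<chi> i. r i) + (\<Sum>k\<in>S. c k * det (\<chi> i. if i = k then w else r i))"
  using assms
proof (induction S arbitrary: r rule: finite_induct)
  case empty
  then show ?case by simp
next
  case (insert a S)
  define r' where "r' = r(a := r a + c a *s w)"
  have e1: "(\<chi> i. if i \<in> insert a S then r i + c i *s w else r i)
      = (\<chi> i. if i \<in> S then r' i + c i *s w else r' i)"
    using insert.hyps by (auto simp: r'_def vec_eq_iff)
  have e2: "det (\<chi> i. r' i) = det (\<chi> i. r i) + c a * det (\<chi> i. if i = a then w else r i)"
  proof -
    have "(\<chi> i. r' i) = (\<chi> i. if i = a then r a + c a *s w else r i)"
      by (auto simp: r'_def vec_eq_iff)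
    then have "det (\<chi> i. r' i) = det (\<chi> i. if i = a then r a else r i)
        + det (\<chi> i. if i = a then c a *s w else r i)"
      by (simp add: det_row_add)
    also have "\<dots> = det (\<chi> i. r i) + c a * det (\<chi> i. if i = a then w else r i)"
    proof -
      have "(\<chi> i. if i = a then r a else r i) = (\<chi> i. r i)" by (simp add: vec_eq_iff)
      then show ?thesis by (simp add: det_row_mul)
    qed
    finally show ?thesis .
  qed
  have e3: "det (\<chi> i. if i = k then w else r' i) = det (\<chi> i. if i = k then w else r i)"
    if "k \<in> S" for k
  proof -
    have ka: "a \<noteq> k" using that insert.hyps by auto
    let ?M = "(\<chi> i. if i = k then w else r i) :: complex^'n^'n"
    have "(\<chi> i. if i = k then w else r' i) = (\<chi> m. if m = a then row a ?M + c a *s row k ?M else row m ?M)"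
      using ka by (auto simp: r'_def vec_eq_iff row_def)
    also have "det \<dots> = det ?M"
      by (rule det_row_operation[OF ka])
    finally show ?thesis .
  qed
  show ?case
    unfolding e1 insert.IH e2 using insert.hyps e3
    by (simp add: algebra_simps)
qed

lemma det_rank1_expand:
  fixes R :: "complex^'n::finite^'n"
  shows "det (R + outer u w) = det R + (\<Sum>k\<in>UNIV. u$k * det (\<chi> i. if i = k then w else R$i))"
proof -
  have "R + outer u w = (\<chi> i. if i \<in> UNIV then R$i + u$i *s w else R$i)"
    by (simp add: vec_eq_iff outer_def)
  then show ?thesis using det_rank1_gen[of UNIV "\<lambda>i. R$i" "\<lambda>i. u$i" w]
    by simp
qed

lemma row_eq: "row i R = R$i"
  by (simp add: row_def vec_eq_iff)

lemma cramer_row: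
  fixes R :: "complex^'n::finite^'n"
  assumes "z v* R = w"
  shows "det (\<chi> i. if i = k then w else R$i) = z$k * det R"
proof -
  have h1: "sum (\<lambda>i. z$i *s row i R) UNIV = w"
    using assms by (auto simp: vec_eq_iff vector_matrix_mult_def row_def sum_component mult.commute)
  have h2: "(\<chi> i. if i = k then w else R$i) = (\<chi> i. if i = k then sum (\<lambda>i. z$i *s row i R) UNIV else row i R)"
    unfolding h1 by (rule arg_cong[where f=vec_lambda]) (auto simp: row_def vec_eq_iff)
  show ?thesis unfolding h2 by (rule cramer_lemma_transpose)
qed

lemma det_rank1:
  fixes R :: "complex^'n::finite^'n"
  assumes "z v* R = w"
  shows "det (R + outer u w) = det R * (1 + dotp z u)"
  using assms by (simp add: det_rank1_expand cramer_row dotp_def sum_distrib_left algebra_simps)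

lemma vm_outer: "z v* outer u w = dotp z u *s w"
  by (simp add: vec_eq_iff vector_matrix_mult_def outer_def dotp_def sum_distrib_left mult_ac)

lemma vm_smult: "(s *s y) v* (A::complex^'n::finite^'n) = s *s (y v* A)"
  by (simp add: vec_eq_iff vector_matrix_mult_def sum_distrib_left mult_ac)

lemma vm_add: "z v* (A + B) = z v* A + (z v* (B::complex^'n::finite^'n))"
  by (simp add: vec_eq_iff vector_matrix_mult_def sum.distrib algebra_simps)

lemma vm_lin: "(z - s *s y) v* (A::complex^'n::finite^'n) = z v* A - s *s (y v* A)"
  by (simp add: vec_eq_iff vector_matrix_mult_def sum_subtractf sum_distrib_left algebra_simps)

lemma dotp_lin: "dotp (z - s *s y) u = dotp z u - s * dotp y u"
  by (simp add: dotp_def sum_subtractf sum_distrib_left algebra_simps)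

lemma det_rank2:
  fixes R :: "complex^'n::finite^'n"
  assumes h1: "z1 v* R = w1" and h2: "z2 v* R = w2" and nz: "1 + dotp z1 u1 \<noteq> 0"
  shows "det (R + outer u1 w1 + outer u2 w2)
     = det R * ((1 + dotp z1 u1) * (1 + dotp z2 u2) - dotp z2 u1 * dotp z1 u2)"
proof -
  define s where "s = dotp z2 u1 / (1 + dotp z1 u1)"
  have s1: "s * (1 + dotp z1 u1) = dotp z2 u1" using nz by (simp add: s_def)
  define z' where "z' = z2 - s *s z1"
  have "z' v* (R + outer u1 w1) = w2"
  proof -
    have "z' v* (R + outer u1 w1) = z' v* R + z' v* outer u1 w1" by (rule vm_add)
    also have "z' v* R = w2 - s *s w1" unfolding z'_def vm_lin h1 h2 ..
    also have "z' v* outer u1 w1 = (dotp z2 u1 - s * dotp z1 u1) *s w1"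
      unfolding vm_outer z'_def dotp_lin ..
    finally have "z' v* (R + outer u1 w1) = w2 - s *s w1 + (dotp z2 u1 - s * dotp z1 u1) *s w1" .
    also have "\<dots> = w2 + (dotp z2 u1 - s * (1 + dotp z1 u1)) *s w1"
      by (simp add: vec_eq_iff field_simps)
    also have "\<dots> = w2" using s1 by simp
    finally show ?thesis .
  qed
  then have "det (R + outer u1 w1 + outer u2 w2) = det (R + outer u1 w1) * (1 + dotp z' u2)"
    using det_rank1[of z' "R + outer u1 w1" w2 u2] by simp
  also have "\<dots> = det R * (1 + dotp z1 u1) * (1 + dotp z2 u2 - s * dotp z1 u2)"
    using det_rank1[OF h1, of u1] by (simp add: z'_def dotp_lin)
  also have "\<dots> = det R * ((1 + dotp z1 u1) * (1 + dotp z2 u2) - dotp z2 u1 * dotp z1 u2)"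
  proof -
    have "(1 + dotp z1 u1) * (1 + dotp z2 u2 - s * dotp z1 u2)
       = (1 + dotp z1 u1) * (1 + dotp z2 u2) - (s * (1 + dotp z1 u1)) * dotp z1 u2"
      by (simp add: algebra_simps)
    then show ?thesis unfolding s1 by (simp add: mult.assoc)
  qed
  finally show ?thesis .
qed

definition vmul :: "complex^'n \<Rightarrow> complex^'n \<Rightarrow> complex^'n" where
  "vmul p q = (\<chi> i. p$i * q$i)"
definition pv :: "complex^'n \<Rightarrow> complex \<Rightarrow> complex^'n" where
  "pv l x = (\<chi> i. x - inverse (l$i))"
definition qv :: "complex^'n \<Rightarrow> complex \<Rightarrow> complex^'n" where
  "qv l x = (\<chi> i. x - l$i)"
definition hv :: "complex^'n \<Rightarrow> complex \<Rightarrow> complex^'n" where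
  "hv l x = (\<chi> i. (x - l$i) / (x - inverse (l$i)))"
definition NN :: "complex^'n^'n \<Rightarrow> complex^'n \<Rightarrow> complex^'n \<Rightarrow> complex^'n^'n" where
  "NN A p q = (\<chi> i j. (if i = j then p$i else 0) + A$i$j * q$j)"
definition rs :: "complex^'n \<Rightarrow> complex^'n^'n \<Rightarrow> complex^'n^'n" where
  "rs p R = (\<chi> i. p$i *s R$i)"
definition Om :: "complex^'n::finite^'n \<Rightarrow> complex^'n \<Rightarrow> complex" where
  "Om A d = det (mat 1 + A ** diagm d)"

lemma det_rs: "det (rs p R) = prod (\<lambda>i. p$i) UNIV * det (R::complex^'n::finite^'n)"
  unfolding rs_def using det_rows_mul[of "\<lambda>i. p$i" "\<lambda>i. R$i"] by simp

lemma mul_diagm: "((A::complex^'n::finite^'n) ** diagm d)$i$j = A$i$j * d$j"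
  by (simp add: matrix_matrix_mult_def diagm_def if_distrib cong: if_cong)

lemma det_diagm: "det (diagm d :: complex^'n::finite^'n) = prod (\<lambda>i. d$i) UNIV"
  by (subst det_diagonal) (auto simp: diagm_def)

lemma Om_NN:
  fixes A :: "complex^'n::finite^'n"
  assumes "\<forall>i. p$i \<noteq> 0"
  shows "Om A (\<chi> i. q$i / p$i) * prod (\<lambda>i. p$i) UNIV = det (NN A p q)"
proof -
  have "NN A p q = (mat 1 + A ** diagm (\<chi> i. q$i / p$i)) ** diagm p"
    using assms by (auto simp: vec_eq_iff NN_def mul_diagm mat_def distrib_right)
  then show ?thesis by (simp add: Om_def det_mul det_diagm)
qed

definition cc :: "complex^'n \<Rightarrow> complex^'n" where "cc l = (\<chi> i. inverse (l$i))"
definition bb :: "complex^'n \<Rightarrow> complex^'n \<Rightarrow> complex^'n" where "bb l a = (\<chi> j. a$j * l$j)"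
definition CC :: "complex^'n \<Rightarrow> complex^'n \<Rightarrow> complex^'n" where "CC l a = (\<chi> j. - (l$j * (a$j * l$j)))"

lemma key:
  fixes A li lj aj :: complex
  assumes "A * (li * lj - 1) = aj * lj" "li \<noteq> 0"
  shows "A * (lj - inverse li) = inverse li * (aj * lj)"
proof -
  have "lj - inverse li = (li * lj - 1) * inverse li" using assms(2) by (simp add: algebra_simps)
  then have "A * (lj - inverse li) = (A * (li * lj - 1)) * inverse li" by simp
  then show ?thesis using assms(1) by simp
qed

lemma N1:
  fixes A :: "complex^'n::finite^'n"
  assumes l0: "\<forall>n. l$n \<noteq> 0" and E: "\<forall>i j. A$i$j * (l$i * l$j - 1) = a$j * l$j"
  shows "NN A (vmul (pv l x) (pv l 0)) (vmul (qv l x) (qv l 0))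
       = rs (pv l x) (NN A (pv l 0) (qv l 0)) + outer (- cc l) (CC l a)"
proof -
  { fix i j
    have li: "l$i \<noteq> 0" and lj: "l$j \<noteq> 0" using l0 by auto
    have aj: "a$j = A$i$j * (l$i * l$j - 1) * inverse (l$j)" using E lj by (simp add: field_simps)
    have "(NN A (vmul (pv l x) (pv l 0)) (vmul (qv l x) (qv l 0)))$i$j
       = (rs (pv l x) (NN A (pv l 0) (qv l 0)) + outer (- cc l) (CC l a))$i$j"
      using li lj
      by (cases "i = j") (simp_all add: NN_def rs_def outer_def vmul_def pv_def qv_def cc_def CC_def aj field_simps)
  }
  then show ?thesis by (simp add: vec_eq_iff)
qed

lemma N2:
  fixes A :: "complex^'n::finite^'n"
  assumes l0: "\<forall>n. l$n \<noteq> 0" and E: "\<forall>i j. A$i$j * (l$i * l$j - 1) = a$j * l$j"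
  shows "rs (pv l 0) (NN A (pv l y) (qv l y))
       = rs (pv l y) (NN A (pv l 0) (qv l 0)) + outer (y *s cc l) (bb l a)"
proof -
  { fix i j
    have li: "l$i \<noteq> 0" and lj: "l$j \<noteq> 0" using l0 by auto
    have aj: "a$j = A$i$j * (l$i * l$j - 1) * inverse (l$j)" using E lj by (simp add: field_simps)
    have "(rs (pv l 0) (NN A (pv l y) (qv l y)))$i$j
       = (rs (pv l y) (NN A (pv l 0) (qv l 0)) + outer (y *s cc l) (bb l a))$i$j"
      using li lj
      by (cases "i = j") (simp_all add: NN_def rs_def outer_def vmul_def pv_def qv_def cc_def bb_def aj field_simps)
  }
  then show ?thesis by (simp add: vec_eq_iff)
qed

lemma N3:
  fixes A :: "complex^'n::finite^'n"
  assumes l0: "\<forall>n. l$n \<noteq> 0" and E: "\<forall>i j. A$i$j * (l$i * l$j - 1) = a$j * l$j"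
  shows "rs (pv l 0) (NN A (vmul (pv l x) (pv l y)) (vmul (qv l x) (qv l y)))
       = rs (vmul (pv l x) (pv l y)) (NN A (pv l 0) (qv l 0))
         + outer (- vmul (pv l x) (cc l)) (CC l a) + outer (x *s cc l) (y *s bb l a + CC l a)"
proof -
  { fix i j
    have li: "l$i \<noteq> 0" and lj: "l$j \<noteq> 0" using l0 by auto
    have aj: "a$j = A$i$j * (l$i * l$j - 1) * inverse (l$j)" using E lj by (simp add: field_simps)
    have "(rs (pv l 0) (NN A (vmul (pv l x) (pv l y)) (vmul (qv l x) (qv l y))))$i$j
       = (rs (vmul (pv l x) (pv l y)) (NN A (pv l 0) (qv l 0))
         + outer (- vmul (pv l x) (cc l)) (CC l a) + outer (x *s cc l) (y *s bb l a + CC l a))$i$j"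
      using li lj
      by (cases "i = j") (simp_all add: NN_def rs_def outer_def vmul_def pv_def qv_def cc_def bb_def CC_def aj field_simps)
  }
  then show ?thesis by (simp add: vec_eq_iff)
qed

lemma rs_outer1:
  assumes "\<forall>i. p$i \<noteq> 0"
  shows "rs p R + outer u w = rs p (R + outer (\<chi> i. u$i / p$i) w)"
  using assms by (simp add: vec_eq_iff rs_def outer_def field_simps)

lemma rs_outer2:
  assumes "\<forall>i. p$i \<noteq> 0"
  shows "rs p R + outer u w + outer u' w' = rs p (R + outer (\<chi> i. u$i / p$i) w + outer (\<chi> i. u'$i / p$i) w')"
  using assms by (simp add: vec_eq_iff rs_def outer_def field_simps)

lemma vm_add_left: "(z1 + z2) v* (A::complex^'n::finite^'n) = z1 v* A + z2 v* A"
  by (simp add: vec_eq_iff vector_matrix_mult_def sum.distrib algebra_simps)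

lemma dotp_uminus: "dotp z (- u) = - dotp z u"
  by (simp add: dotp_def sum_negf)
lemma dotp_smult: "dotp z (s *s u) = s * dotp z u"
  by (simp add: dotp_def sum_distrib_left mult_ac)
lemma dotp_lin2: "dotp (s *s z1 + z2) u = s * dotp z1 u + dotp z2 u"
  by (simp add: dotp_def sum_distrib_left sum.distrib algebra_simps)

lemma hv_eq: "hv l x = (\<chi> i. qv l x $ i / pv l x $ i)"
  by (simp add: hv_def qv_def pv_def)
lemma hv_eq2: "vmul (hv l x) (hv l y) = (\<chi> i. vmul (qv l x) (qv l y) $ i / vmul (pv l x) (pv l y) $ i)"
  by (simp add: vec_eq_iff hv_def qv_def pv_def vmul_def)
lemma prod_vmul: "prod (\<lambda>i. vmul p q $ i) UNIV = prod (\<lambda>i. p$i) UNIV * prod (\<lambda>i. q$i) UNIV"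
  by (simp add: vmul_def prod.distrib)

lemma scal:
  fixes x y Bx By Cx Cy Br Cr :: complex
  assumes "(x - y) * Br = By - Bx" "(x - y) * Cr = Cy - Cx"
  shows "(x - y) * ((1 - Cy) * (1 + x * (y * Br + Cr)) + (y * By + Cy) * (x * Cr))
       = x * (1 - Cx) * (1 + y * By) - y * (1 + x * Bx) * (1 - Cy)"
  using assms by algebra

lemma dotp_r:
  assumes "\<forall>i. pv l x $ i \<noteq> 0" "\<forall>i. pv l y $ i \<noteq> 0"
  shows "(x - y) * dotp z (\<chi> i. cc l $ i / (pv l x $ i * pv l y $ i))
       = dotp z (\<chi> i. cc l $ i / pv l y $ i) - dotp z (\<chi> i. cc l $ i / pv l x $ i)"
proof -
  have "\<And>i. (x - y) * (z$i * (cc l $ i / (pv l x $ i * pv l y $ i)))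
        = z$i * (cc l $ i / pv l y $ i) - z$i * (cc l $ i / pv l x $ i)"
  proof -
    fix i
    define P where "P = pv l x $ i"
    define Q where "Q = pv l y $ i"
    have P: "P \<noteq> 0" and Q: "Q \<noteq> 0" using assms by (auto simp: P_def Q_def)
    have PQ: "x - y = P - Q" by (simp add: pv_def P_def Q_def)
    have "z$i * (cc l $ i / Q) - z$i * (cc l $ i / P) = (P - Q) * (z$i * (cc l $ i / (P * Q)))"
      using P Q by (simp add: field_simps)
    then show "(x - y) * (z$i * (cc l $ i / (pv l x $ i * pv l y $ i)))
        = z$i * (cc l $ i / pv l y $ i) - z$i * (cc l $ i / pv l x $ i)"
      unfolding PQ P_def[symmetric] Q_def[symmetric] by simp
  qed
  then show ?thesis by (simp add: dotp_def sum_distrib_left sum_subtractf)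
qed

lemma core_inv:
  fixes A :: "complex^'n::finite^'n"
  assumes l0: "\<forall>n. l$n \<noteq> 0" and E: "\<forall>i j. A$i$j * (l$i * l$j - 1) = a$j * l$j"
    and hx: "\<forall>n. x \<noteq> inverse (l$n)" and hy: "\<forall>n. y \<noteq> inverse (l$n)" and xy: "x \<noteq> y"
    and dX: "det (NN A (pv l 0) (qv l 0)) \<noteq> 0"
    and dY: "det (NN A (vmul (pv l y) (pv l 0)) (vmul (qv l y) (qv l 0))) \<noteq> 0"
  shows "(x - y) * Om A (hv l 0) * Om A (vmul (hv l x) (hv l y))
       = x * Om A (vmul (hv l x) (hv l 0)) * Om A (hv l y) - y * Om A (hv l x) * Om A (vmul (hv l y) (hv l 0))"
proof -
  define X where "X = NN A (pv l 0) (qv l 0)"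
  have "invertible X" using dX by (simp add: X_def invertible_det_nz)
  then obtain B where B: "B ** X = mat 1" unfolding invertible_def by blast
  define zb where "zb = bb l a v* B"
  define zC where "zC = CC l a v* B"
  have hb: "zb v* X = bb l a" by (simp add: zb_def vector_matrix_mul_assoc B)
  have hC: "zC v* X = CC l a" by (simp add: zC_def vector_matrix_mul_assoc B)
  have hQ: "(y *s zb + zC) v* X = y *s bb l a + CC l a"
    by (simp add: vm_add_left vm_smult hb hC)
  have p0: "\<forall>i. pv l 0 $ i \<noteq> 0" using l0 by (simp add: pv_def)
  have px: "\<forall>i. pv l x $ i \<noteq> 0" using hx by (simp add: pv_def)
  have py: "\<forall>i. pv l y $ i \<noteq> 0" using hy by (simp add: pv_def)
  have pxy: "\<forall>i. vmul (pv l x) (pv l y) $ i \<noteq> 0" using px py by (simp add: vmul_def)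
  have px0: "\<forall>i. vmul (pv l x) (pv l 0) $ i \<noteq> 0" using px p0 by (simp add: vmul_def)
  have py0: "\<forall>i. vmul (pv l y) (pv l 0) $ i \<noteq> 0" using py p0 by (simp add: vmul_def)
  define P0 where "P0 = prod (\<lambda>i. pv l 0 $ i) UNIV"
  define Px where "Px = prod (\<lambda>i. pv l x $ i) UNIV"
  define Py where "Py = prod (\<lambda>i. pv l y $ i) UNIV"
  have P0: "P0 \<noteq> 0" using p0 by (simp add: P0_def)
  have Px: "Px \<noteq> 0" using px by (simp add: Px_def)
  have Py: "Py \<noteq> 0" using py by (simp add: Py_def)
  define dx where "dx = det X"
  define ux where "ux = (\<chi> i. cc l $ i / pv l x $ i)"
  define uy where "uy = (\<chi> i. cc l $ i / pv l y $ i)"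
  define r where "r = (\<chi> i. cc l $ i / (pv l x $ i * pv l y $ i))"
  define Bx where "Bx = dotp zb ux"
  define By where "By = dotp zb uy"
  define Cx where "Cx = dotp zC ux"
  define Cy where "Cy = dotp zC uy"
  define Br where "Br = dotp zb r"
  define Cr where "Cr = dotp zC r"
  have rB: "(x - y) * Br = By - Bx" unfolding Br_def By_def Bx_def r_def uy_def ux_def
    by (rule dotp_r[OF px py])
  have rC: "(x - y) * Cr = Cy - Cx" unfolding Cr_def Cy_def Cx_def r_def uy_def ux_def
    by (rule dotp_r[OF px py])
  have O0: "Om A (hv l 0) = dx / P0"
    using Om_NN[OF p0, of A "qv l 0"] P0 by (simp add: hv_eq[symmetric] P0_def dx_def X_def field_simps)
  have Ov0: "Om A (vmul (hv l v) (hv l 0)) = dx * (1 - dotp zC (\<chi> i. cc l $ i / pv l v $ i)) / P0"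
    if pv: "\<forall>i. pv l v $ i \<noteq> 0" for v
  proof -
    have pv0: "\<forall>i. vmul (pv l v) (pv l 0) $ i \<noteq> 0" using pv p0 by (simp add: vmul_def)
    have Pv: "prod (\<lambda>i. pv l v $ i) UNIV \<noteq> 0" using pv by simp
    have "Om A (vmul (hv l v) (hv l 0)) * (prod (\<lambda>i. pv l v $ i) UNIV * P0)
        = det (NN A (vmul (pv l v) (pv l 0)) (vmul (qv l v) (qv l 0)))"
      using Om_NN[OF pv0, of A "vmul (qv l v) (qv l 0)"]
      by (simp add: hv_eq2[symmetric] prod_vmul P0_def)
    also have "\<dots> = det (rs (pv l v) X + outer (- cc l) (CC l a))"
      by (simp add: N1[OF l0 E] X_def)
    also have "\<dots> = det (rs (pv l v) (X + outer (- (\<chi> i. cc l $ i / pv l v $ i)) (CC l a)))"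
    proof -
      have "(\<chi> i. (- cc l) $ i / pv l v $ i) = - (\<chi> i. cc l $ i / pv l v $ i)"
        by (simp add: vec_eq_iff)
      then show ?thesis by (simp add: rs_outer1[OF pv])
    qed
    also have "\<dots> = prod (\<lambda>i. pv l v $ i) UNIV * (dx * (1 - dotp zC (\<chi> i. cc l $ i / pv l v $ i)))"
      by (simp add: det_rs det_rank1[OF hC] dotp_uminus dx_def)
    finally have "prod (\<lambda>i. pv l v $ i) UNIV * (Om A (vmul (hv l v) (hv l 0)) * P0)
       = prod (\<lambda>i. pv l v $ i) UNIV * (dx * (1 - dotp zC (\<chi> i. cc l $ i / pv l v $ i)))"
      by (simp add: ac_simps)
    then have "Om A (vmul (hv l v) (hv l 0)) * P0 = dx * (1 - dotp zC (\<chi> i. cc l $ i / pv l v $ i))"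
      using Pv by simp
    then show ?thesis using P0 by (simp add: field_simps)
  qed
  have Ov: "Om A (hv l v) = dx * (1 + v * dotp zb (\<chi> i. cc l $ i / pv l v $ i)) / P0"
    if pv: "\<forall>i. pv l v $ i \<noteq> 0" for v
  proof -
    have Pv: "prod (\<lambda>i. pv l v $ i) UNIV \<noteq> 0" using pv by simp
    have "P0 * (Om A (hv l v) * prod (\<lambda>i. pv l v $ i) UNIV)
        = P0 * det (NN A (pv l v) (qv l v))"
      using Om_NN[OF pv, of A "qv l v"] by (simp add: hv_eq[symmetric])
    also have "\<dots> = det (rs (pv l 0) (NN A (pv l v) (qv l v)))"
      by (simp add: det_rs P0_def)
    also have "\<dots> = det (rs (pv l v) X + outer (v *s cc l) (bb l a))"
      by (simp add: N2[OF l0 E] X_def)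
    also have "\<dots> = det (rs (pv l v) (X + outer (v *s (\<chi> i. cc l $ i / pv l v $ i)) (bb l a)))"
    proof -
      have "(\<chi> i. (v *s cc l) $ i / pv l v $ i) = v *s (\<chi> i. cc l $ i / pv l v $ i)"
        by (simp add: vec_eq_iff)
      then show ?thesis by (simp add: rs_outer1[OF pv])
    qed
    also have "\<dots> = prod (\<lambda>i. pv l v $ i) UNIV * (dx * (1 + v * dotp zb (\<chi> i. cc l $ i / pv l v $ i)))"
      by (simp add: det_rs det_rank1[OF hb] dotp_smult dx_def)
    finally have "prod (\<lambda>i. pv l v $ i) UNIV * (Om A (hv l v) * P0)
       = prod (\<lambda>i. pv l v $ i) UNIV * (dx * (1 + v * dotp zb (\<chi> i. cc l $ i / pv l v $ i)))"
      by (simp add: ac_simps)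
    then have "Om A (hv l v) * P0 = dx * (1 + v * dotp zb (\<chi> i. cc l $ i / pv l v $ i))"
      using Pv by simp
    then show ?thesis using P0 by (simp add: field_simps)
  qed
  have Ox0: "Om A (vmul (hv l x) (hv l 0)) = dx * (1 - Cx) / P0"
    using Ov0[OF px] by (simp add: Cx_def ux_def)
  have Oy0: "Om A (vmul (hv l y) (hv l 0)) = dx * (1 - Cy) / P0"
    using Ov0[OF py] by (simp add: Cy_def uy_def)
  have Ox: "Om A (hv l x) = dx * (1 + x * Bx) / P0"
    using Ov[OF px] by (simp add: Bx_def ux_def)
  have Oy: "Om A (hv l y) = dx * (1 + y * By) / P0"
    using Ov[OF py] by (simp add: By_def uy_def)
  have Cy1: "1 + dotp zC (- uy) \<noteq> 0"
  proof -
    have "Om A (vmul (hv l y) (hv l 0)) * (Py * P0) = det (NN A (vmul (pv l y) (pv l 0)) (vmul (qv l y) (qv l 0)))"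
      using Om_NN[OF py0, of A "vmul (qv l y) (qv l 0)"]
      by (simp add: hv_eq2[symmetric] prod_vmul P0_def Py_def)
    then have "Om A (vmul (hv l y) (hv l 0)) \<noteq> 0" using dY by auto
    then show ?thesis using Oy0 by (simp add: Cy_def dotp_uminus)
  qed
  have Oxy: "Om A (vmul (hv l x) (hv l y))
      = dx * ((1 - Cy) * (1 + x * (y * Br + Cr)) + (y * By + Cy) * (x * Cr)) / P0"
  proof -
    have "P0 * (Om A (vmul (hv l x) (hv l y)) * (Px * Py))
        = P0 * det (NN A (vmul (pv l x) (pv l y)) (vmul (qv l x) (qv l y)))"
      using Om_NN[OF pxy, of A "vmul (qv l x) (qv l y)"]
      by (simp add: hv_eq2[symmetric] prod_vmul Px_def Py_def)
    also have "\<dots> = det (rs (pv l 0) (NN A (vmul (pv l x) (pv l y)) (vmul (qv l x) (qv l y))))"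
      by (simp add: det_rs P0_def)
    also have "\<dots> = det (rs (vmul (pv l x) (pv l y)) X + outer (- vmul (pv l x) (cc l)) (CC l a)
                        + outer (x *s cc l) (y *s bb l a + CC l a))"
      by (simp add: N3[OF l0 E] X_def)
    also have "\<dots> = det (rs (vmul (pv l x) (pv l y)) (X + outer (- uy) (CC l a) + outer (x *s r) (y *s bb l a + CC l a)))"
    proof -
      have e1: "(\<chi> i. (- vmul (pv l x) (cc l)) $ i / vmul (pv l x) (pv l y) $ i) = - uy"
        using px by (simp add: vec_eq_iff uy_def vmul_def)
      have e2: "(\<chi> i. (x *s cc l) $ i / vmul (pv l x) (pv l y) $ i) = x *s r"
        by (simp add: vec_eq_iff r_def vmul_def)
      show ?thesis by (subst rs_outer2[OF pxy]) (simp only: e1 e2)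
    qed
    also have "\<dots> = (Px * Py) * (dx * ((1 + dotp zC (- uy)) * (1 + dotp (y *s zb + zC) (x *s r))
                      - dotp (y *s zb + zC) (- uy) * dotp zC (x *s r)))"
      by (simp add: det_rs prod_vmul Px_def Py_def det_rank2[OF hC hQ Cy1] dx_def)
    also have "\<dots> = (Px * Py) * (dx * ((1 - Cy) * (1 + x * (y * Br + Cr)) + (y * By + Cy) * (x * Cr)))"
    proof -
      have d1: "dotp zC (- uy) = - Cy" by (simp add: dotp_uminus Cy_def)
      have d2: "dotp (y *s zb + zC) (x *s r) = x * (y * Br + Cr)"
        unfolding dotp_lin2 dotp_smult Br_def Cr_def by (simp add: algebra_simps)
      have d3: "dotp (y *s zb + zC) (- uy) = - (y * By + Cy)"
        unfolding dotp_lin2 dotp_uminus By_def Cy_def by (simp add: algebra_simps)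
      have d4: "dotp zC (x *s r) = x * Cr" by (simp add: dotp_smult Cr_def)
      show ?thesis unfolding d1 d2 d3 d4 by algebra
    qed
    finally have "(Px * Py) * (Om A (vmul (hv l x) (hv l y)) * P0)
        = (Px * Py) * (dx * ((1 - Cy) * (1 + x * (y * Br + Cr)) + (y * By + Cy) * (x * Cr)))"
      by (simp add: ac_simps)
    then have "Om A (vmul (hv l x) (hv l y)) * P0 = dx * ((1 - Cy) * (1 + x * (y * Br + Cr)) + (y * By + Cy) * (x * Cr))"
      using Px Py by simp
    then show ?thesis using P0 by (simp add: field_simps)
  qed
  have main: "(x - y) * ((1 - Cy) * (1 + x * (y * Br + Cr)) + (y * By + Cy) * (x * Cr))
       = x * (1 - Cx) * (1 + y * By) - y * (1 + x * Bx) * (1 - Cy)"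
    by (rule scal[OF rB rC])
  define K where "K = dx / P0"
  have O0': "Om A (hv l 0) = K" using O0 by (simp add: K_def)
  have Oxy': "Om A (vmul (hv l x) (hv l y)) = K * ((1 - Cy) * (1 + x * (y * Br + Cr)) + (y * By + Cy) * (x * Cr))"
    using Oxy by (simp add: K_def)
  have Ox0': "Om A (vmul (hv l x) (hv l 0)) = K * (1 - Cx)" using Ox0 by (simp add: K_def)
  have Oy0': "Om A (vmul (hv l y) (hv l 0)) = K * (1 - Cy)" using Oy0 by (simp add: K_def)
  have Ox': "Om A (hv l x) = K * (1 + x * Bx)" using Ox by (simp add: K_def)
  have Oy': "Om A (hv l y) = K * (1 + y * By)" using Oy by (simp add: K_def)
  have L: "(x - y) * K * (K * ((1 - Cy) * (1 + x * (y * Br + Cr)) + (y * By + Cy) * (x * Cr)))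
      = K * K * ((x - y) * ((1 - Cy) * (1 + x * (y * Br + Cr)) + (y * By + Cy) * (x * Cr)))"
    by (simp only: ac_simps)
  have R: "x * (K * (1 - Cx)) * (K * (1 + y * By)) - y * (K * (1 + x * Bx)) * (K * (1 - Cy))
      = K * K * (x * (1 - Cx) * (1 + y * By) - y * (1 + x * Bx) * (1 - Cy))"
    by (simp add: algebra_simps)
  show ?thesis
    unfolding O0' Oxy' Ox0' Oy0' Ox' Oy' L R main ..
qed

lemma det_poly:
  fixes P :: "'n::finite \<Rightarrow> 'n \<Rightarrow> complex poly"
  shows "\<exists>r. \<forall>t. det (\<chi> i j. poly (P i j) t) = poly r t"
proof
  let ?r = "\<Sum>p\<in>{p. p permutes (UNIV::'n set)}. smult (of_int (sign p)) (\<Prod>i\<in>UNIV. P i (p i))"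
  show "\<forall>t. det (\<chi> i j. poly (P i j) t) = poly ?r t"
    by (simp add: det_def poly_sum poly_prod)
qed

lemma NN_poly:
  fixes A :: "complex^'n::finite^'n"
  shows "\<exists>r. \<forall>t. det (NN (\<chi> i j. t * A$i$j) p q) = poly r t"
proof -
  obtain r where r: "\<forall>t. det (\<chi> i j. poly ([: (if i = j then p$i else 0), A$i$j * q$j :]) t) = poly r t"
    using det_poly[of "\<lambda>i j. [: (if i = j then p$i else 0), A$i$j * q$j :]"] by blast
  have "\<And>t. NN (\<chi> i j. t * A$i$j) p q = (\<chi> i j. poly ([: (if i = j then p$i else 0), A$i$j * q$j :]) t)"
    by (simp add: NN_def vec_eq_iff algebra_simps)
  then show ?thesis using r by metis
qed

lemma NN_zero:
  "det (NN (\<chi> i j. 0 * (A::complex^'n::finite^'n)$i$j) p q) = prod (\<lambda>i. p$i) UNIV"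
proof -
  have "NN (\<chi> i j. 0 * A$i$j) p q = diagm p" by (simp add: NN_def diagm_def vec_eq_iff)
  then show ?thesis by (simp add: det_diagm)
qed

lemma Om_NN1: "Om B d = det (NN B (\<chi> i. 1) d)"
proof -
  have "mat 1 + B ** diagm d = NN B (\<chi> i. 1) d"
    by (simp add: vec_eq_iff NN_def mul_diagm mat_def)
  then show ?thesis by (simp add: Om_def)
qed

lemma Om_poly:
  fixes A :: "complex^'n::finite^'n"
  shows "\<exists>r. \<forall>t. Om (\<chi> i j. t * A$i$j) d = poly r t"
  using NN_poly[of A "\<chi> i. 1" d] by (simp add: Om_NN1)

lemma poly_ne0:
  assumes "poly s 0 \<noteq> 0"
  shows "finite {t::complex. poly s t = 0}"
proof -
  have "s \<noteq> 0" using assms by auto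
  then show ?thesis by (rule poly_roots_finite)
qed

lemma core:
  fixes A :: "complex^'n::finite^'n"
  assumes l0: "\<forall>n. l$n \<noteq> 0" and E: "\<forall>i j. A$i$j * (l$i * l$j - 1) = a$j * l$j"
    and hx: "\<forall>n. x \<noteq> inverse (l$n)" and hy: "\<forall>n. y \<noteq> inverse (l$n)"
  shows "(x - y) * Om A (hv l 0) * Om A (vmul (hv l x) (hv l y))
       = x * Om A (vmul (hv l x) (hv l 0)) * Om A (hv l y) - y * Om A (hv l x) * Om A (vmul (hv l y) (hv l 0))"
proof (cases "x = y")
  case True
  then show ?thesis by (simp add: algebra_simps)
next
  case xy: False
  define At where "At t = (\<chi> i j. t * A$i$j)" for t :: complex
  obtain r1 where r1: "\<forall>t. Om (At t) (hv l 0) = poly r1 t" using Om_poly[of A] unfolding At_def by blast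
  obtain r2 where r2: "\<forall>t. Om (At t) (vmul (hv l x) (hv l y)) = poly r2 t" using Om_poly[of A] unfolding At_def by blast
  obtain r3 where r3: "\<forall>t. Om (At t) (vmul (hv l x) (hv l 0)) = poly r3 t" using Om_poly[of A] unfolding At_def by blast
  obtain r4 where r4: "\<forall>t. Om (At t) (hv l y) = poly r4 t" using Om_poly[of A] unfolding At_def by blast
  obtain r5 where r5: "\<forall>t. Om (At t) (hv l x) = poly r5 t" using Om_poly[of A] unfolding At_def by blast
  obtain r6 where r6: "\<forall>t. Om (At t) (vmul (hv l y) (hv l 0)) = poly r6 t" using Om_poly[of A] unfolding At_def by blast
  obtain s1 where s1: "\<forall>t. det (NN (At t) (pv l 0) (qv l 0)) = poly s1 t"
    using NN_poly[of A] unfolding At_def by blast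
  obtain s2 where s2: "\<forall>t. det (NN (At t) (vmul (pv l y) (pv l 0)) (vmul (qv l y) (qv l 0))) = poly s2 t"
    using NN_poly[of A] unfolding At_def by blast
  have p0: "\<forall>i. pv l 0 $ i \<noteq> 0" using l0 by (simp add: pv_def)
  have py: "\<forall>i. pv l y $ i \<noteq> 0" using hy by (simp add: pv_def)
  have fs1: "finite {t. poly s1 t = 0}"
  proof (rule poly_ne0)
    have "poly s1 0 = prod (\<lambda>i. pv l 0 $ i) UNIV" using s1 NN_zero[of A] by (metis At_def)
    then show "poly s1 0 \<noteq> 0" using p0 by simp
  qed
  have fs2: "finite {t. poly s2 t = 0}"
  proof (rule poly_ne0)
    have "poly s2 0 = prod (\<lambda>i. vmul (pv l y) (pv l 0) $ i) UNIV" using s2 NN_zero[of A] by (metis At_def)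
    then show "poly s2 0 \<noteq> 0" using p0 py by (simp add: vmul_def)
  qed
  define R where "R = smult (x - y) (r1 * r2) - smult x (r3 * r4) + smult y (r5 * r6)"
  have Rt: "poly R t = (x - y) * Om (At t) (hv l 0) * Om (At t) (vmul (hv l x) (hv l y))
       - (x * Om (At t) (vmul (hv l x) (hv l 0)) * Om (At t) (hv l y) - y * Om (At t) (hv l x) * Om (At t) (vmul (hv l y) (hv l 0)))" for t
    by (simp add: R_def r1 r2 r3 r4 r5 r6 algebra_simps)
  have zero: "poly R t = 0" if "poly s1 t \<noteq> 0" "poly s2 t \<noteq> 0" for t
  proof -
    have Et: "\<forall>i j. At t $i$j * (l$i * l$j - 1) = (t *s a)$j * l$j"
      using E by (simp add: At_def)
    have "(x - y) * Om (At t) (hv l 0) * Om (At t) (vmul (hv l x) (hv l y))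
       = x * Om (At t) (vmul (hv l x) (hv l 0)) * Om (At t) (hv l y) - y * Om (At t) (hv l x) * Om (At t) (vmul (hv l y) (hv l 0))"
      by (rule core_inv[OF l0 Et hx hy xy]) (use that s1 s2 in auto)
    then show ?thesis by (simp add: Rt)
  qed
  have "R = 0"
  proof (rule ccontr)
    assume "R \<noteq> 0"
    then have "finite {t. poly R t = 0}" by (rule poly_roots_finite)
    moreover have "UNIV \<subseteq> {t. poly R t = 0} \<union> {t. poly s1 t = 0} \<union> {t. poly s2 t = 0}"
      using zero by auto
    ultimately have "finite (UNIV :: complex set)" using fs1 fs2 by (meson finite_UnI finite_subset)
    then show False by (simp add: infinite_UNIV_char_0)
  qed
  then have "poly R 1 = 0" by simp
  moreover have "At 1 = A" by (simp add: At_def vec_eq_iff)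
  ultimately show ?thesis by (simp add: Rt)
qed

definition one :: "complex^'n" where "one = (\<chi> i. 1)"

lemma diagm_mul_left: "(diagm d ** (A::complex^'n::finite^'n))$i$j = d$i * A$i$j"
proof -
  have "(diagm d ** A)$i$j = (\<Sum>k\<in>UNIV. if k = i then d$i * A$i$j else 0)"
    unfolding matrix_matrix_mult_def diagm_def vec_lambda_beta by (rule sum.cong) auto
  then show ?thesis by simp
qed

lemma Hm_eq: "Hm l x = diagm (hv l x)"
  by (simp add: Hm_def hv_def)

lemma diagm_prod: "diagm d ** diagm e = (diagm (vmul d e) :: complex^'n::finite^'n)"
  by (simp add: vec_eq_iff mul_diagm) (simp add: diagm_def vmul_def)

lemma Om_mul: "Om ((A::complex^'n::finite^'n) ** diagm d) e = Om A (vmul d e)"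
  by (simp add: Om_def matrix_mul_assoc[symmetric] diagm_prod)

lemma tau_Om: "tau (B::complex^'n::finite^'n) F = Om B one"
proof -
  have "diagm one = (mat 1 :: complex^'n^'n)" by (simp add: vec_eq_iff diagm_def mat_def one_def)
  then show ?thesis by (simp add: tau_def Om_def)
qed

lemma matrix_inv_diagm:
  assumes "\<forall>n. d$n \<noteq> 0"
  shows "matrix_inv (diagm d :: complex^'n::finite^'n) = diagm (\<chi> n. inverse (d$n))"
proof -
  let ?D = "diagm d :: complex^'n^'n" and ?E = "diagm (\<chi> n. inverse (d$n)) :: complex^'n^'n"
  have v: "vmul d (\<chi> n. inverse (d$n)) = one" "vmul (\<chi> n. inverse (d$n)) d = one"
    using assms by (simp_all add: vec_eq_iff vmul_def one_def)
  have o: "diagm one = (mat 1 :: complex^'n^'n)" by (simp add: vec_eq_iff diagm_def mat_def one_def)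
  have DE: "?D ** ?E = mat 1" "?E ** ?D = mat 1" by (simp_all add: diagm_prod v o)
  let ?M = "matrix_inv ?D"
  have "?D ** ?M = mat 1 \<and> ?M ** ?D = mat 1"
    using someI[of "\<lambda>A'. ?D ** A' = mat 1 \<and> A' ** ?D = mat 1" ?E] DE unfolding matrix_inv_def by blast
  then have "?M = ?M ** (?D ** ?E)" using DE by simp
  also have "\<dots> = ?E" using \<open>?D ** ?M = mat 1 \<and> ?M ** ?D = mat 1\<close> by (simp add: matrix_mul_assoc)
  finally show ?thesis .
qed

lemma E_of_hA:
  fixes A :: "complex^'n::finite^'n"
  assumes l0: "\<forall>n. l$n \<noteq> 0" and h: "Lmat l ** A - A ** Linv l = (\<chi> i j. a $ j)"
  shows "\<forall>i j. A$i$j * (l$i * l$j - 1) = a$j * l$j"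
proof (intro allI)
  fix i j
  have "(Lmat l ** A - A ** Linv l)$i$j = a$j" using h by simp
  then have "l$i * A$i$j - A$i$j * inverse (l$j) = a$j"
    by (simp add: Lmat_def Linv_def diagm_mul_left mul_diagm)
  then have "(l$i * A$i$j - A$i$j * inverse (l$j)) * l$j = a$j * l$j" by simp
  then show "A$i$j * (l$i * l$j - 1) = a$j * l$j" using l0 by (simp add: algebra_simps)
qed

lemma E_scale:
  assumes "\<forall>i j. (A::complex^'n::finite^'n)$i$j * (l$i * l$j - 1) = a$j * l$j"
  shows "\<forall>i j. (A ** diagm d)$i$j * (l$i * l$j - 1) = (vmul a d)$j * l$j"
  using assms by (simp add: mul_diagm vmul_def)

lemma vmul_one: "vmul d one = d"
  by (simp add: vec_eq_iff vmul_def one_def)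

lemma sc1:
  fixes \<xi> \<eta> F o1 oxyi ox oyi oxi oy :: complex
  assumes "\<xi> \<noteq> 0" "\<eta> \<noteq> 0" "F \<noteq> 0"
    and h: "(\<xi> - \<eta>) * o1 * oxyi = \<xi> * ox * oyi - \<eta> * oxi * oy"
  shows "(\<xi> - \<eta>) * o1 * (- inverse (- \<eta> * (- \<xi> * F)) * oxyi)
       = (- inverse (- \<xi> * F) * oxi) * oy - ox * (- inverse (- \<eta> * F) * oyi)"
proof -
  have "(\<xi> - \<eta>) * o1 * (- inverse (- \<eta> * (- \<xi> * F)) * oxyi)
       - ((- inverse (- \<xi> * F) * oxi) * oy - ox * (- inverse (- \<eta> * F) * oyi))
     = - inverse (\<xi> * \<eta> * F) * ((\<xi> - \<eta>) * o1 * oxyi - (\<xi> * ox * oyi - \<eta> * oxi * oy))"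
    using assms(1-3) by (simp add: field_simps)
  then show ?thesis using h by simp
qed

lemma sc3:
  fixes \<xi> \<eta> F o1 oxy oxyi ox oy o0 :: complex
  assumes "\<xi> \<noteq> 0" "\<eta> \<noteq> 0" "F \<noteq> 0"
    and h: "(\<xi> - inverse \<eta>) * oy * ox = \<xi> * oxy * o1 - inverse \<eta> * oxyi * o0"
  shows "(1 - 1 / (\<xi> * \<eta>)) * ox * oy = o1 * oxy + F * o0 * (- inverse (- \<eta> * (- \<xi> * F)) * oxyi)"
proof -
  have "(1 - 1 / (\<xi> * \<eta>)) * ox * oy - (o1 * oxy + F * o0 * (- inverse (- \<eta> * (- \<xi> * F)) * oxyi))
     = inverse \<xi> * ((\<xi> - inverse \<eta>) * oy * ox - (\<xi> * oxy * o1 - inverse \<eta> * oxyi * o0))"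
    using assms(1-3) by (simp add: field_simps)
  then show ?thesis using h by simp
qed

lemma keyh:
  fixes \<eta> m :: complex
  assumes "m \<noteq> 0" "\<eta> \<noteq> 0" "\<eta> \<noteq> m" "\<eta> \<noteq> inverse m"
  shows "inverse ((inverse \<eta> - m) / (inverse \<eta> - inverse m)) * ((0 - m) / (0 - inverse m))
       = (\<eta> - m) / (\<eta> - inverse m)"
proof -
  have a: "\<eta> * m - 1 \<noteq> 0"
  proof
    assume "\<eta> * m - 1 = 0"
    then have "\<eta> = inverse m" using assms(1) by (simp add: field_simps)
    then show False using assms(4) by simp
  qed
  have b: "\<eta> - m \<noteq> 0" using assms(3) by simp
  have c: "m - \<eta> \<noteq> 0" using assms(3) by simp
  have d: "1 - \<eta> * m \<noteq> 0" using a by (simp add: algebra_simps) 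
  show ?thesis using assms(1,2) a b c d by (simp add: field_simps)
qed

theorem proposition4p1p1:
  fixes l :: "complex^'n" and A :: "complex^'n^'n" and F \<xi> \<eta> :: complex
  assumes hl: "\<forall>n. l $ n \<noteq> 0"
    and hA: "\<exists>a :: complex^'n. Lmat l ** A - A ** Linv l = (\<chi> i j. a $ j)"
    and hF: "F \<noteq> 0"
    and h\<xi>: "\<xi> \<noteq> 0" "\<forall>n. \<xi> \<noteq> l $ n \<and> \<xi> \<noteq> inverse (l $ n)"
    and h\<eta>: "\<eta> \<noteq> 0" "\<forall>n. \<eta> \<noteq> l $ n \<and> \<eta> \<noteq> inverse (l $ n)"
  shows
    "((\<xi> - \<eta>) * tau A F * shift l \<xi> (shift l \<eta> (sigma l)) A F
       = shift l \<xi> (sigma l) A F * shift l \<eta> tau A F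
         - shift l \<xi> tau A F * shift l \<eta> (sigma l) A F)
   \<and> ((\<xi> - \<eta>) * rho l A F * shift l \<xi> (shift l \<eta> tau) A F
       = shift l \<xi> tau A F * shift l \<eta> (rho l) A F
         - shift l \<xi> (rho l) A F * shift l \<eta> tau A F)
   \<and> ((1 - 1 / (\<xi> * \<eta>)) * shift l \<xi> tau A F * shift l \<eta> tau A F
       = tau A F * shift l \<xi> (shift l \<eta> tau) A F
         + rho l A F * shift l \<xi> (shift l \<eta> (sigma l)) A F)"
proof -
  obtain a where ha: "Lmat l ** A - A ** Linv l = (\<chi> i j. a $ j)" using hA by blast
  have E: "\<forall>i j. A$i$j * (l$i * l$j - 1) = a$j * l$j" by (rule E_of_hA[OF hl ha])
  define h0 where "h0 = hv l 0"
  define hx where "hx = hv l \<xi>"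
  define hy where "hy = hv l \<eta>"
  define h0i where "h0i = (\<chi> n. inverse (h0$n))"
  have h0nz: "\<forall>n. h0$n \<noteq> 0" using hl by (simp add: h0_def hv_def)
  have ax: "\<forall>n. \<xi> \<noteq> inverse (l$n)" using h\<xi> by auto
  have ay: "\<forall>n. \<eta> \<noteq> inverse (l$n)" using h\<eta> by auto
  have sig: "sigma l B G = - inverse G * Om B h0i" for B G
    using h0nz by (simp add: sigma_def Hm_eq matrix_inv_diagm Om_def h0_def h0i_def)
  have rh: "rho l B G = G * Om B h0" for B G
    by (simp add: rho_def Hm_eq Om_def h0_def)
  have T0: "tau A F = Om A one" by (rule tau_Om)
  have Tx: "shift l \<xi> tau A F = Om A hx" by (simp add: shift_def tau_Om Hm_eq Om_mul vmul_one hx_def)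
  have Ty: "shift l \<eta> tau A F = Om A hy" by (simp add: shift_def tau_Om Hm_eq Om_mul vmul_one hy_def)
  have Txy: "shift l \<xi> (shift l \<eta> tau) A F = Om A (vmul hx hy)"
    by (simp add: shift_def tau_Om Hm_eq Om_mul vmul_one hx_def hy_def)
  have Sx: "shift l \<xi> (sigma l) A F = - inverse (- \<xi> * F) * Om A (vmul hx h0i)"
    by (simp add: shift_def sig Hm_eq Om_mul hx_def)
  have Sy: "shift l \<eta> (sigma l) A F = - inverse (- \<eta> * F) * Om A (vmul hy h0i)"
    by (simp add: shift_def sig Hm_eq Om_mul hy_def)
  have Sxy: "shift l \<xi> (shift l \<eta> (sigma l)) A F = - inverse (- \<eta> * (- \<xi> * F)) * Om A (vmul hx (vmul hy h0i))"
    by (simp add: shift_def sig Hm_eq Om_mul hx_def hy_def)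
  have R0: "rho l A F = F * Om A h0" by (rule rh)
  have Rx: "shift l \<xi> (rho l) A F = (- \<xi> * F) * Om A (vmul hx h0)"
    by (simp add: shift_def rh Hm_eq Om_mul hx_def)
  have Ry: "shift l \<eta> (rho l) A F = (- \<eta> * F) * Om A (vmul hy h0)"
    by (simp add: shift_def rh Hm_eq Om_mul hy_def)
  have I2: "(\<xi> - \<eta>) * Om A h0 * Om A (vmul hx hy)
       = \<xi> * Om A (vmul hx h0) * Om A hy - \<eta> * Om A hx * Om A (vmul hy h0)"
    unfolding h0_def hx_def hy_def by (rule core[OF hl E ax ay])
  have G2: "(\<xi> - \<eta>) * rho l A F * shift l \<xi> (shift l \<eta> tau) A F
       = shift l \<xi> tau A F * shift l \<eta> (rho l) A F
         - shift l \<xi> (rho l) A F * shift l \<eta> tau A F"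
  proof -
    have "(\<xi> - \<eta>) * (F * Om A h0) * Om A (vmul hx hy) - (Om A hx * ((- \<eta> * F) * Om A (vmul hy h0))
       - ((- \<xi> * F) * Om A (vmul hx h0)) * Om A hy)
       = F * ((\<xi> - \<eta>) * Om A h0 * Om A (vmul hx hy)
       - (\<xi> * Om A (vmul hx h0) * Om A hy - \<eta> * Om A hx * Om A (vmul hy h0)))"
      by (simp add: algebra_simps)
    then show ?thesis unfolding R0 Txy Tx Ry Rx Ty I2 by simp
  qed
  have E1: "\<forall>i j. (A ** diagm h0i)$i$j * (l$i * l$j - 1) = (vmul a h0i)$j * l$j"
    by (rule E_scale[OF E])
  have I1raw: "(\<xi> - \<eta>) * Om (A ** diagm h0i) h0 * Om (A ** diagm h0i) (vmul hx hy)
       = \<xi> * Om (A ** diagm h0i) (vmul hx h0) * Om (A ** diagm h0i) hy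
         - \<eta> * Om (A ** diagm h0i) hx * Om (A ** diagm h0i) (vmul hy h0)"
    unfolding h0_def hx_def hy_def by (rule core[OF hl E1 ax ay])
  have v1: "vmul h0i h0 = one" using h0nz by (simp add: vec_eq_iff vmul_def h0i_def one_def)
  have v2: "vmul h0i (vmul hx hy) = vmul hx (vmul hy h0i)" by (simp add: vec_eq_iff vmul_def)
  have v3: "vmul h0i (vmul hx h0) = hx" using h0nz by (simp add: vec_eq_iff vmul_def h0i_def)
  have v4: "vmul h0i hy = vmul hy h0i" by (simp add: vec_eq_iff vmul_def)
  have v5: "vmul h0i hx = vmul hx h0i" by (simp add: vec_eq_iff vmul_def)
  have v6: "vmul h0i (vmul hy h0) = hy" using h0nz by (simp add: vec_eq_iff vmul_def h0i_def)
  have I1: "(\<xi> - \<eta>) * Om A one * Om A (vmul hx (vmul hy h0i))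
       = \<xi> * Om A hx * Om A (vmul hy h0i) - \<eta> * Om A (vmul hx h0i) * Om A hy"
    using I1raw unfolding Om_mul v1 v2 v3 v4 v5 v6 .
  have G1: "(\<xi> - \<eta>) * tau A F * shift l \<xi> (shift l \<eta> (sigma l)) A F
       = shift l \<xi> (sigma l) A F * shift l \<eta> tau A F
         - shift l \<xi> tau A F * shift l \<eta> (sigma l) A F"
    unfolding T0 Sxy Sx Ty Tx Sy by (rule sc1[OF h\<xi>(1) h\<eta>(1) hF I1])
  define w where "w = inverse \<eta>"
  define hw where "hw = hv l w"
  define hwi where "hwi = (\<chi> n. inverse (hw$n))"
  have aw: "\<forall>n. w \<noteq> inverse (l$n)"
  proof
    fix n
    show "w \<noteq> inverse (l$n)"
    proof
      assume "w = inverse (l$n)"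
      then have "\<eta> = l$n" unfolding w_def by (metis inverse_inverse_eq)
      then show False using h\<eta>(2) by auto
    qed
  qed
  have E3: "\<forall>i j. (A ** diagm hwi)$i$j * (l$i * l$j - 1) = (vmul a hwi)$j * l$j"
    by (rule E_scale[OF E])
  have I3raw: "(\<xi> - w) * Om (A ** diagm hwi) h0 * Om (A ** diagm hwi) (vmul hx hw)
       = \<xi> * Om (A ** diagm hwi) (vmul hx h0) * Om (A ** diagm hwi) hw
         - w * Om (A ** diagm hwi) hx * Om (A ** diagm hwi) (vmul hw h0)"
    unfolding h0_def hx_def hw_def by (rule core[OF hl E3 ax aw])
  have hwnz: "\<forall>n. hw$n \<noteq> 0"
  proof
    fix n
    have "w \<noteq> l$n"
    proof
      assume "w = l$n"
      then have "\<eta> = inverse (l$n)" unfolding w_def by (metis inverse_inverse_eq)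
      then show False using h\<eta>(2) by auto
    qed
    then show "hw$n \<noteq> 0" using aw by (simp add: hw_def hv_def)
  qed
  have u1: "vmul hwi h0 = hy"
  proof -
    { fix n
      have "inverse (hw$n) * h0$n = hy$n"
        unfolding hw_def h0_def hy_def hv_def w_def vec_lambda_beta
        by (rule keyh) (use hl h\<eta> in auto) }
    then show ?thesis by (simp add: vec_eq_iff vmul_def hwi_def)
  qed
  have u2: "vmul hwi (vmul hx hw) = hx" using hwnz by (simp add: vec_eq_iff vmul_def hwi_def)
  have u3: "vmul hwi (vmul hx h0) = vmul hx hy"
    using u1 by (simp add: vec_eq_iff vmul_def)
  have u4: "vmul hwi hw = one" using hwnz by (simp add: vec_eq_iff vmul_def hwi_def one_def)
  have u5: "vmul hwi hx = vmul hx (vmul hy h0i)"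
  proof -
    have "vmul hwi hx = vmul hx (vmul (vmul hwi h0) h0i)"
      using h0nz by (simp add: vec_eq_iff vmul_def h0i_def)
    then show ?thesis unfolding u1 .
  qed
  have u6: "vmul hwi (vmul hw h0) = h0" using hwnz by (simp add: vec_eq_iff vmul_def hwi_def)
  have I3: "(\<xi> - inverse \<eta>) * Om A hy * Om A hx
       = \<xi> * Om A (vmul hx hy) * Om A one - inverse \<eta> * Om A (vmul hx (vmul hy h0i)) * Om A h0"
    using I3raw unfolding Om_mul u1 u2 u3 u4 u5 u6 w_def .
  have G3: "(1 - 1 / (\<xi> * \<eta>)) * shift l \<xi> tau A F * shift l \<eta> tau A F
       = tau A F * shift l \<xi> (shift l \<eta> tau) A F
         + rho l A F * shift l \<xi> (shift l \<eta> (sigma l)) A F"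
    unfolding Tx Ty T0 Txy R0 Sxy by (rule sc3[OF h\<xi>(1) h\<eta>(1) hF I3])
  show ?thesis using G1 G2 G3 by blast
qed

end
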